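(* Let $k\ge 1$ and $n\ge 3$, and let $c$ be a connected $k$-colouring of the edges of $K_n$ whose vertices are $v_1,\dots,v_n$, with the following properties: (i) exactly $l$ distinct $3$-sets of colours occur as colour sets of multicoloured triangles; (ii) exactly $k-2$ of these $3$-sets contain colour $k$; (iii) the edges of colour $k$ are exactly the edges of the cycle $v_1v_2\cdots v_nv_1$; (iv) all edges $v_iv_{i+2}$, $i\in[n]$, have the same colour (indices taken mod $n$). Then there is a connected $(k+1)$-colouring $c'$ of the edges of $K_{2n}$, whose vertices can be labelled $v'_1,\dots,v'_{2n}$, with the following properties: (i') exactly $l+k-1$ distinct $3$-sets of colours occur as colour sets of multicoloured triangles; (ii') exactly $k-1$ of these $3$-sets contain colour $k+1$; (iii') the edges of colour $k+1$ form a cycle; (iv') all edges $v'_iv'_{i+2}$, $i\in[2n]$, have the same colour (indices taken mod $2n$).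
   Context: A $k$-colouring of the edges of the complete graph $K_n$ (colours from $\{1,\dots,k\}$) is called connected if for each colour $i$ the edges of colour $i$ form a connected spanning subgraph of $K_n$. A triangle is multicoloured if its three edges have three distinct colours; its colour set is the set of these three colours. *)

theory Defs
  imports Main
begin

text \<open>Edge colourings of K_n with vertex set {0..<n} (vertex v_i is i-1),
  represented by a symmetric function on pairs of distinct vertices.\<close>

definition is_colouring :: "(nat \<Rightarrow> nat \<Rightarrow> nat) \<Rightarrow> nat \<Rightarrow> nat \<Rightarrow> bool" where
  "is_colouring c n k \<longleftrightarrow>
     (\<forall>u<n. \<forall>v<n. u \<noteq> v \<longrightarrow> c u v = c v u \<and> c u v \<in> {1..k})"

definition colour_edge :: "(nat \<Rightarrow> nat \<Rightarrow> nat) \<Rightarrow> nat \<Rightarrow> nat \<Rightarrow> nat \<Rightarrow> nat \<Rightarrow> bool" where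
  "colour_edge c n i u v \<longleftrightarrow> u < n \<and> v < n \<and> u \<noteq> v \<and> c u v = i"

definition connected_colouring :: "(nat \<Rightarrow> nat \<Rightarrow> nat) \<Rightarrow> nat \<Rightarrow> nat \<Rightarrow> bool" where
  "connected_colouring c n k \<longleftrightarrow> is_colouring c n k \<and>
     (\<forall>i\<in>{1..k}. \<forall>u<n. \<forall>v<n. (colour_edge c n i)\<^sup>*\<^sup>* u v)"

definition triangle_sets :: "(nat \<Rightarrow> nat \<Rightarrow> nat) \<Rightarrow> nat \<Rightarrow> nat set set" where
  "triangle_sets c n = {{c a b, c b d, c a d} | a b d.
      a < n \<and> b < n \<and> d < n \<and> a \<noteq> b \<and> b \<noteq> d \<and> a \<noteq> d \<and>
      card {c a b, c b d, c a d} = 3}"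

definition colour_class_is_cycle :: "(nat \<Rightarrow> nat \<Rightarrow> nat) \<Rightarrow> nat \<Rightarrow> nat \<Rightarrow> bool" where
  "colour_class_is_cycle c n i \<longleftrightarrow>
     (\<exists>m p. m \<ge> 3 \<and> inj_on p {0..<m} \<and> p ` {0..<m} \<subseteq> {0..<n} \<and>
        (\<forall>u v. colour_edge c n i u v \<longleftrightarrow>
           (\<exists>j<m. (u = p j \<and> v = p (Suc j mod m)) \<or> (v = p j \<and> u = p (Suc j mod m)))))"

end

theory Submission imports Defs begin

definition cyc :: "nat \<Rightarrow> nat \<Rightarrow> nat \<Rightarrow> bool" where
  "cyc N x y \<longleftrightarrow> y = Suc x mod N \<or> x = Suc y mod N"

lemma sucmod: "x < N \<Longrightarrow> Suc x mod N = (if Suc x = N then 0 else Suc x)"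
  by auto

lemma cyc_fib1:
  assumes "x < 2*n" "y = Suc x mod (2*n)" "x div 2 \<noteq> y div 2"
  shows "y div 2 = Suc (x div 2) mod n \<and> odd x"
proof (cases "Suc x = 2*n")
  case True
  then have "y = 0" using assms by simp
  moreover have "x div 2 = n - 1" using True by linarith
  moreover have "n > 0" using True by simp
  moreover have "odd x" using True by presburger
  ultimately show ?thesis by simp
next
  case False then have y: "y = Suc x" using assms by (simp add: sucmod)
  then have o: "odd x" using assms(3) by auto
  then obtain q where q: "x = 2*q+1" by (meson oddE)
  then have "y div 2 = Suc (x div 2)" using y by simp
  moreover have "Suc (x div 2) < n" using y assms(1) False q by simp
  ultimately show ?thesis using o by simp
qed

lemma cyc_fib:
  assumes "x < 2*n" "y < 2*n" "cyc (2*n) x y" "x div 2 \<noteq> y div 2"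
  shows "cyc n (x div 2) (y div 2)"
proof -
  have "y = Suc x mod (2*n) \<or> x = Suc y mod (2*n)" using assms(3) unfolding cyc_def .
  then show ?thesis
  proof
    assume "y = Suc x mod (2*n)"
    from cyc_fib1[OF assms(1) this assms(4)] show ?thesis unfolding cyc_def by simp
  next
    assume "x = Suc y mod (2*n)"
    from cyc_fib1[OF assms(2) this] assms(4) show ?thesis unfolding cyc_def by simp
  qed
qed

lemma two_adj: "a<2 \<Longrightarrow> b<2 \<Longrightarrow> x = 2*d+a \<Longrightarrow> y=2*d+b \<Longrightarrow> x\<noteq>y \<Longrightarrow> y = Suc x \<or> x = Suc y"
  by presburger

lemma cyc_sym: "cyc N x y \<longleftrightarrow> cyc N y x" unfolding cyc_def by auto

lemma cyc_same_fib:
  assumes "x < 2*n" "y < 2*n" "x \<noteq> y" "x div 2 = y div 2"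
  shows "cyc (2*n) x y"
proof -
  have ex: "x = 2*(x div 2) + x mod 2" "y = 2*(x div 2) + y mod 2" by (simp, simp add: assms(4))
  have "y = Suc x \<or> x = Suc y"
    using two_adj[OF _ _ ex assms(3)] by simp
  moreover have "Suc x < 2*n" if "y = Suc x" using that assms by simp
  moreover have "Suc y < 2*n" if "x = Suc y" using that assms by simp
  ultimately show ?thesis unfolding cyc_def by auto
qed

lemma even_not_cyc:
  assumes "x < 2*n" "y < 2*n" "even x" "even y"
  shows "\<not> cyc (2*n) x y"
proof -
  have "Suc x \<noteq> 2*n"
  proof
    assume "Suc x = 2*n" then have "even (Suc x)" by simp
    then show False using assms(3) by simp
  qed
  then have "Suc x < 2*n" using assms(1) by linarith
  have "Suc y \<noteq> 2*n"
  proof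
    assume "Suc y = 2*n" then have "even (Suc y)" by simp
    then show False using assms(4) by simp
  qed
  then have "Suc y < 2*n" using assms(2) by linarith
  with \<open>Suc x < 2*n\<close> show ?thesis unfolding cyc_def using assms by auto
qed

lemma fib2: "(x+2) mod (2*n) div 2 = Suc (x div 2) mod n"
proof -
  have "(x+2) mod (2*n) = 2 * ((x+2) div 2 mod n) + (x+2) mod 2" by (rule mod_mult2_eq)
  moreover have "(x+2) div 2 = Suc (x div 2)" "(x+2) mod 2 = x mod 2" by simp_all
  ultimately have "(x+2) mod (2*n) = 2 * (Suc (x div 2) mod n) + x mod 2" by simp
  then show ?thesis by simp
qed

lemma card3: "card {x,y,z::'a} = 3 \<Longrightarrow> x\<noteq>y \<and> y\<noteq>z \<and> x\<noteq>z"
  by (auto simp: card_insert_if split: if_splits)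

lemma rtp_sym: assumes "\<And>a b. R a b \<Longrightarrow> R b a" and "R\<^sup>*\<^sup>* a b" shows "R\<^sup>*\<^sup>* b a"
  using assms(2) by (induction rule: rtranclp_induct) (auto intro: converse_rtranclp_into_rtranclp assms(1))

lemma rtp_steps:
  fixes x s t N :: nat
  assumes "0 < N" "\<And>x. x < N \<Longrightarrow> R x ((x+s) mod N)" "x < N"
  shows "R\<^sup>*\<^sup>* x ((x + s*t) mod N)"
proof (induction t)
  case 0 then show ?case using assms(3) by simp
next
  case (Suc t)
  have "R ((x + s*t) mod N) (((x + s*t) mod N + s) mod N)" using assms by simp
  moreover have "((x + s*t) mod N + s) mod N = (x + s * Suc t) mod N"
  proof -
    have "((x + s*t) mod N + s) mod N = (x + s*t + s) mod N" by (rule mod_add_left_eq)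
    also have "x + s*t + s = x + s*Suc t" by simp
    finally show ?thesis .
  qed
  ultimately show ?case using Suc by (metis rtranclp.rtrancl_into_rtrancl)
qed

lemma tri_intro: "a<N \<Longrightarrow> b<N \<Longrightarrow> d<N \<Longrightarrow> a\<noteq>b \<Longrightarrow> b\<noteq>d \<Longrightarrow> a\<noteq>d
  \<Longrightarrow> card {f a b, f b d, f a d} = 3 \<Longrightarrow> {f a b, f b d, f a d} \<in> triangle_sets f N"
  unfolding triangle_sets_def by blast

locale L6 =
  fixes c :: "nat \<Rightarrow> nat \<Rightarrow> nat" and n k col :: nat
  assumes n4: "n \<ge> 4" and k2: "k \<ge> 2"
  and iscol: "is_colouring c n k"
  and conn: "\<forall>i\<in>{1..k}. \<forall>u<n. \<forall>v<n. (colour_edge c n i)\<^sup>*\<^sup>* u v"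
  and ck: "\<forall>u<n. \<forall>v<n. u \<noteq> v \<longrightarrow> (c u v = k \<longleftrightarrow> v = Suc u mod n \<or> u = Suc v mod n)"
  and ccol: "\<forall>i<n. c i ((i + 2) mod n) = col"
begin

definition c' where "c' x y = (if cyc (2*n) x y then k+1 else c (x div 2) (y div 2))"

lemma ck': "u<n \<Longrightarrow> v<n \<Longrightarrow> u\<noteq>v \<Longrightarrow> c u v = k \<longleftrightarrow> cyc n u v"
  using ck unfolding cyc_def by auto

lemma csym: "u<n \<Longrightarrow> v<n \<Longrightarrow> u\<noteq>v \<Longrightarrow> c u v = c v u"
  using iscol unfolding is_colouring_def by auto

lemma crange: "u<n \<Longrightarrow> v<n \<Longrightarrow> u\<noteq>v \<Longrightarrow> c u v \<in> {1..k}"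
  using iscol unfolding is_colouring_def by auto

lemma fib_ne: "x<2*n \<Longrightarrow> y<2*n \<Longrightarrow> x\<noteq>y \<Longrightarrow> \<not>cyc (2*n) x y \<Longrightarrow> x div 2 \<noteq> y div 2"
  using cyc_same_fib by blast

lemma c'_sym: "x<2*n \<Longrightarrow> y<2*n \<Longrightarrow> x\<noteq>y \<Longrightarrow> c' x y = c' y x"
proof -
  assume a: "x<2*n" "y<2*n" "x\<noteq>y"
  show ?thesis
  proof (cases "cyc (2*n) x y")
    case True
    then have "cyc (2*n) y x" using cyc_sym by blast
    then show ?thesis using True unfolding c'_def by simp
  next
    case False
    then have f: "\<not> cyc (2*n) y x" using cyc_sym by blast
    have "x div 2 \<noteq> y div 2" using fib_ne a False by blast
    moreover have "x div 2 < n" "y div 2 < n" using a by auto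
    ultimately have "c (x div 2) (y div 2) = c (y div 2) (x div 2)" using csym by blast
    then show ?thesis using False f unfolding c'_def by simp
  qed
qed

lemma c'_range: "x<2*n \<Longrightarrow> y<2*n \<Longrightarrow> x\<noteq>y \<Longrightarrow> c' x y \<in> {1..k+1}"
  unfolding c'_def using fib_ne[of x y] crange[of "x div 2" "y div 2"] by (auto simp: less_mult_imp_div_less)

lemma c'_k1: "x<2*n \<Longrightarrow> y<2*n \<Longrightarrow> x\<noteq>y \<Longrightarrow> c' x y = k+1 \<longleftrightarrow> cyc (2*n) x y"
proof -
  assume a: "x<2*n" "y<2*n" "x\<noteq>y"
  show ?thesis
  proof (cases "cyc (2*n) x y")
    case True then show ?thesis unfolding c'_def by simp
  next
    case False
    have "x div 2 \<noteq> y div 2" using fib_ne a False by blast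
    moreover have "x div 2 < n" "y div 2 < n" using a by auto
    ultimately have "c (x div 2) (y div 2) \<in> {1..k}" using crange by blast
    then show ?thesis using False unfolding c'_def by simp
  qed
qed

lemma c'_lift: "x<2*n \<Longrightarrow> y<2*n \<Longrightarrow> x div 2 \<noteq> y div 2 \<Longrightarrow> c (x div 2) (y div 2) \<noteq> k
   \<Longrightarrow> c' x y = c (x div 2) (y div 2)"
proof -
  assume a: "x<2*n" "y<2*n" "x div 2 \<noteq> y div 2" "c (x div 2) (y div 2) \<noteq> k"
  have "\<not> cyc (2*n) x y"
  proof
    assume "cyc (2*n) x y"
    then have "cyc n (x div 2) (y div 2)" using cyc_fib a by blast
    moreover have "x div 2 < n" "y div 2 < n" using a by auto
    ultimately show False using ck' a by blast
  qed
  then show ?thesis unfolding c'_def by simp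
qed

lemma c02: "c 0 2 = col"
proof -
  have "c 0 ((0+2) mod n) = col" using ccol n4 by (meson le_trans less_le_trans zero_less_numeral numeral_le_iff semiring_norm(69) not_less_eq_eq)
  moreover have "(0+2) mod n = (2::nat)" using n4 by simp
  ultimately show ?thesis by (simp only:)
qed

lemma col_k: "col \<noteq> k" "col \<in> {1..k}"
proof -
  have "\<not> cyc n 0 2" using n4 unfolding cyc_def by auto
  then show "col \<noteq> k" using ck'[of 0 2] n4 c02 by auto
  show "col \<in> {1..k}" using crange[of 0 2] n4 c02 by auto
qed


definition T where "T = {S\<in>triangle_sets c n. k \<in> S}"
definition NewS where "NewS = (\<lambda>S. insert (k+1) (S - {k})) ` T \<union> {{k+1,k,col}}"

lemma odd_fib: "(2*a+1) div 2 = (a::nat)" by simp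

lemma c'_even: "a<n \<Longrightarrow> b<n \<Longrightarrow> c' (2*a) (2*b) = c a b"
  unfolding c'_def using even_not_cyc[of "2*a" n "2*b"] by simp

lemma old_sub: "triangle_sets c n \<subseteq> triangle_sets c' (2*n)"
proof
  fix S assume "S \<in> triangle_sets c n"
  then obtain a b d where h: "S = {c a b, c b d, c a d}" "a < n" "b < n" "d < n" "a \<noteq> b" "b \<noteq> d" "a \<noteq> d"
      "card {c a b, c b d, c a d} = 3"
    unfolding triangle_sets_def by blast
  have "S = {c' (2*a) (2*b), c' (2*b) (2*d), c' (2*a) (2*d)}" using h c'_even by simp
  moreover have "card {c' (2*a) (2*b), c' (2*b) (2*d), c' (2*a) (2*d)} = 3" using h c'_even by simp
  moreover have "{c' (2*a) (2*b), c' (2*b) (2*d), c' (2*a) (2*d)} \<in> triangle_sets c' (2*n)"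
    by (rule tri_intro) (use h calculation(2) in auto)
  ultimately show "S \<in> triangle_sets c' (2*n)" by simp
qed

lemma lift_T:
  assumes "a<n" "b<n" "d<n" "a\<noteq>b" "b\<noteq>d" "a\<noteq>d" "b = Suc a mod n"
    "c a d \<noteq> k" "c b d \<noteq> k" "c a d \<noteq> c b d"
  shows "{k+1, c b d, c a d} \<in> triangle_sets c' (2*n)"
proof -
  define x where "x = 2*a+1"
  define y where "y = 2*b"
  define z where "z = 2*d"
  have xl: "x < 2*n" "y < 2*n" "z < 2*n" using assms unfolding x_def y_def z_def by auto
  have "2*b = 2*(Suc a mod n)" using assms by simp
  also have "\<dots> = (2 * Suc a) mod (2*n)" by (rule mod_mult_mult1[symmetric])
  also have "2 * Suc a = Suc x" unfolding x_def by simp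
  finally have yx: "y = Suc x mod (2*n)" unfolding y_def .
  then have 1: "c' x y = k+1" unfolding c'_def cyc_def by simp
  have 2: "c' y z = c b d" unfolding y_def z_def using c'_even assms by simp
  have "Suc z < 2*n" using assms unfolding z_def by simp
  then have sz: "Suc z mod (2*n) = Suc z" by simp
  have "\<not> cyc (2*n) x z"
  proof
    assume "cyc (2*n) x z"
    then have "z = y \<or> x = Suc z" unfolding cyc_def using yx sz by simp
    then show False unfolding x_def y_def z_def using assms(5,6) by auto
  qed
  then have 3: "c' x z = c a d" unfolding c'_def x_def z_def by simp
  have "c b d \<le> k" "c a d \<le> k" using crange assms by auto
  then have "card {k+1, c b d, c a d} = 3" using assms(10) by auto
  moreover have "x \<noteq> y" unfolding x_def y_def by presburger
  moreover have "y \<noteq> z" unfolding y_def z_def using assms(5) by simp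
  moreover have "x \<noteq> z" unfolding x_def z_def by presburger
  ultimately have "{c' x y, c' y z, c' x z} \<in> triangle_sets c' (2*n)"
    using tri_intro[of x "2*n" y z c'] xl 1 2 3 by simp
  then show ?thesis using 1 2 3 by simp
qed


lemma lift_T2:
  assumes "a<n" "b<n" "d<n" "a\<noteq>b" "b\<noteq>d" "a\<noteq>d" "cyc n a b"
    "c a d \<noteq> k" "c b d \<noteq> k" "c a d \<noteq> c b d"
  shows "{k+1, c a d, c b d} \<in> triangle_sets c' (2*n)"
proof -
  have "b = Suc a mod n \<or> a = Suc b mod n" using assms(7) unfolding cyc_def .
  then show ?thesis
  proof
    assume "b = Suc a mod n"
    from lift_T[OF assms(1-6) this assms(8-10)] show ?thesis by (simp add: insert_commute)
  next
    assume "a = Suc b mod n"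
    from lift_T[OF assms(2,1,3) assms(4)[symmetric] assms(6,5) this assms(9,8) assms(10)[symmetric]]
    show ?thesis .
  qed
qed

lemma T_sub: "S \<in> T \<Longrightarrow> insert (k+1) (S - {k}) \<in> triangle_sets c' (2*n)"
proof -
  assume "S \<in> T"
  then have S: "S \<in> triangle_sets c n" and kS: "k \<in> S" unfolding T_def by auto
  from S obtain a b d where h: "S = {c a b, c b d, c a d}" "a < n" "b < n" "d < n" "a \<noteq> b" "b \<noteq> d" "a \<noteq> d"
      "card {c a b, c b d, c a d} = 3"
    unfolding triangle_sets_def by blast
  have ds: "c a b \<noteq> c b d" "c b d \<noteq> c a d" "c a b \<noteq> c a d" using card3[OF h(8)] by auto
  have sy: "c b a = c a b" "c d b = c b d" "c d a = c a d" using csym h(2-7) by metis+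
  consider "c a b = k" | "c b d = k" | "c a d = k" using kS h(1) by blast
  then show ?thesis
  proof cases
    case 1
    have "cyc n a b" using ck' h 1 by auto
    from lift_T2[OF h(2-7) this] 1 ds have "{k+1, c a d, c b d} \<in> triangle_sets c' (2*n)" by auto
    moreover have "insert (k+1) (S - {k}) = {k+1, c a d, c b d}" using h(1) 1 ds by auto
    ultimately show ?thesis by simp
  next
    case 2
    have "cyc n b d" using ck' h 2 by auto
    from lift_T2[OF h(3,4,2) h(6) h(7)[symmetric] h(5)[symmetric] this] 2 ds sy
    have "{k+1, c a b, c a d} \<in> triangle_sets c' (2*n)" by auto
    moreover have "insert (k+1) (S - {k}) = {k+1, c a b, c a d}" using h(1) 2 ds by auto
    ultimately show ?thesis by simp
  next
    case 3
    have "cyc n a d" using ck' h 3 by auto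
    from lift_T2[OF h(2,4,3) h(7) h(6)[symmetric] h(5) this] 3 ds sy
    have "{k+1, c a b, c b d} \<in> triangle_sets c' (2*n)" by auto
    moreover have "insert (k+1) (S - {k}) = {k+1, c a b, c b d}" using h(1) 3 ds by auto
    ultimately show ?thesis by simp
  qed
qed

lemma special: "{k+1, k, col} \<in> triangle_sets c' (2*n)"
proof -
  have 1: "c' 1 2 = k+1" unfolding c'_def cyc_def using n4 by simp
  have "cyc n 1 2" unfolding cyc_def using n4 by simp
  then have "c 1 2 = k" using ck' n4 by simp
  then have 2: "c' 2 4 = k" using c'_even[of 1 2] n4 by simp
  have "\<not> cyc (2*n) 1 4" unfolding cyc_def using n4 by simp
  then have 3: "c' 1 4 = col" unfolding c'_def using c02 by simp
  have "card {k+1, k, col} = 3" using col_k by auto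
  then have "card {c' 1 2, c' 2 4, c' 1 4} = 3" using 1 2 3 by simp
  then have "{c' 1 2, c' 2 4, c' 1 4} \<in> triangle_sets c' (2*n)"
    by (rule tri_intro[rotated 6]) (use n4 in auto)
  then show ?thesis using 1 2 3 by simp
qed

lemma suc_mod_inj: assumes "i<n" "j<n" "Suc i mod n = Suc j mod n" shows "i = j"
proof -
  have "Suc i mod n = (if Suc i = n then 0 else Suc i)" "Suc j mod n = (if Suc j = n then 0 else Suc j)"
    using sucmod assms by blast+
  then have "(if Suc i = n then 0 else Suc i) = (if Suc j = n then 0 else (Suc j::nat))" using assms(3) by simp
  then show ?thesis
  proof (cases "Suc i = n")
    case True
    then show ?thesis using \<open>(if Suc i = n then 0 else Suc i) = (if Suc j = n then 0 else Suc j)\<close>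
      by (cases "Suc j = n") simp_all
  next
    case False
    then show ?thesis using \<open>(if Suc i = n then 0 else Suc i) = (if Suc j = n then 0 else Suc j)\<close>
      by (cases "Suc j = n") simp_all
  qed
qed

lemma one_edge:
  assumes "x<2*n" "y<2*n" "z<2*n" "x\<noteq>y" "y\<noteq>z" "x\<noteq>z" "y = Suc x mod (2*n)"
    "\<not>cyc (2*n) x z" "\<not>cyc (2*n) y z" "card {k+1, c' y z, c' x z} = 3"
  shows "{k+1, c' y z, c' x z} \<in> NewS"
proof -
  define i where "i = x div 2"
  define i' where "i' = y div 2"
  define j where "j = z div 2"
  have lt: "i<n" "i'<n" "j<n" using assms(1-3) unfolding i_def i'_def j_def by auto
  have ji: "j \<noteq> i" "j \<noteq> i'" using fib_ne[of x z] fib_ne[of y z] assms unfolding i_def i'_def j_def by auto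
  have e1: "c' y z = c i' j" "c' x z = c i j" unfolding c'_def i_def i'_def j_def using assms by auto
  have ds: "k+1 \<noteq> c i' j" "c i' j \<noteq> c i j" "k+1 \<noteq> c i j" using card3[OF assms(10)] e1 by auto
  then have ii: "i \<noteq> i'" by auto
  then have i'eq: "i' = Suc i mod n" using cyc_fib1[OF assms(1,7)] unfolding i_def i'_def by auto
  consider "c i j = k" | "c i' j = k" | "c i j \<noteq> k" "c i' j \<noteq> k" by blast
  then show ?thesis
  proof cases
    case 1
    then have "cyc n i j" using ck' lt ji by auto
    then have "i = Suc j mod n" unfolding cyc_def using i'eq ji by auto
    then have "i' = (j + 2) mod n" using i'eq by (simp add: mod_Suc_eq)
    then have "c j i' = col" using ccol lt by auto
    then have "c i' j = col" using csym lt ji by auto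
    then have "{k+1, c' y z, c' x z} = {k+1, k, col}" using e1 1 by auto
    then show ?thesis unfolding NewS_def by auto
  next
    case 2
    then have "cyc n i' j" using ck' lt ji by auto
    then have "j = Suc i' mod n" unfolding cyc_def using i'eq ji suc_mod_inj lt by metis
    then have "j = (i + 2) mod n" using i'eq by (simp add: mod_Suc_eq)
    then have "c i j = col" using ccol lt by auto
    then have "{k+1, c' y z, c' x z} = {k+1, k, col}" using e1 2 by auto
    then show ?thesis unfolding NewS_def by auto
  next
    case 3
    have "cyc n i i'" unfolding cyc_def using i'eq by simp
    then have cii: "c i i' = k" using ck' lt ii by auto
    have "card {c i i', c i' j, c i j} = 3" using cii 3 ds by auto
    then have "{c i i', c i' j, c i j} \<in> triangle_sets c n"
      unfolding triangle_sets_def using lt ji ii by blast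
    then have "{c i i', c i' j, c i j} \<in> T" unfolding T_def using cii by auto
    moreover have "insert (k+1) ({c i i', c i' j, c i j} - {k}) = {k+1, c' y z, c' x z}"
      using cii 3 e1 by auto
    ultimately show ?thesis unfolding NewS_def by (metis UnI1 image_eqI)
  qed
qed

lemma tri_sub: "triangle_sets c' (2*n) \<subseteq> triangle_sets c n \<union> NewS"
proof
  fix S assume "S \<in> triangle_sets c' (2*n)"
  then obtain x y z where h: "S = {c' x y, c' y z, c' x z}" "x < 2*n" "y < 2*n" "z < 2*n" "x \<noteq> y" "y \<noteq> z" "x \<noteq> z"
      "card {c' x y, c' y z, c' x z} = 3"
    unfolding triangle_sets_def by blast
  have cS: "card S = 3" using h(1,8) by simp
  have ds: "c' x y \<noteq> c' y z" "c' y z \<noteq> c' x z" "c' x y \<noteq> c' x z" using card3[OF h(8)] by auto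
  have sy: "c' y x = c' x y" "c' z y = c' y z" "c' z x = c' x z" using c'_sym h by auto
  have k1: "c' x y = k+1 \<longleftrightarrow> cyc (2*n) x y" "c' y z = k+1 \<longleftrightarrow> cyc (2*n) y z"
    "c' x z = k+1 \<longleftrightarrow> cyc (2*n) x z" using c'_k1 h by auto
  consider (n0) "\<not>cyc (2*n) x y" "\<not>cyc (2*n) y z" "\<not>cyc (2*n) x z"
    | (xy) "cyc (2*n) x y" "\<not>cyc (2*n) y z" "\<not>cyc (2*n) x z"
    | (yz) "\<not>cyc (2*n) x y" "cyc (2*n) y z" "\<not>cyc (2*n) x z"
    | (xz) "\<not>cyc (2*n) x y" "\<not>cyc (2*n) y z" "cyc (2*n) x z"
  proof -
    have nc: "\<not> (cyc (2*n) x y \<and> cyc (2*n) y z)" "\<not> (cyc (2*n) y z \<and> cyc (2*n) x z)"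
      "\<not> (cyc (2*n) x y \<and> cyc (2*n) x z)" using ds k1 by auto
    assume a1: "\<not>cyc (2*n) x y \<Longrightarrow> \<not>cyc (2*n) y z \<Longrightarrow> \<not>cyc (2*n) x z \<Longrightarrow> thesis"
      and a2: "cyc (2*n) x y \<Longrightarrow> \<not>cyc (2*n) y z \<Longrightarrow> \<not>cyc (2*n) x z \<Longrightarrow> thesis"
      and a3: "\<not>cyc (2*n) x y \<Longrightarrow> cyc (2*n) y z \<Longrightarrow> \<not>cyc (2*n) x z \<Longrightarrow> thesis"
      and a4: "\<not>cyc (2*n) x y \<Longrightarrow> \<not>cyc (2*n) y z \<Longrightarrow> cyc (2*n) x z \<Longrightarrow> thesis"
    show thesis
    proof (cases "cyc (2*n) x y")
      case True then show ?thesis using a2 nc by blast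
    next
      case False
      show ?thesis
      proof (cases "cyc (2*n) y z")
        case True then show ?thesis using a3 nc False by blast
      next
        case f2: False
        show ?thesis
        proof (cases "cyc (2*n) x z")
          case True then show ?thesis using a4 False f2 by blast
        next
          case f3: False then show ?thesis using a1 False f2 by blast
        qed
      qed
    qed
  qed
  then show "S \<in> triangle_sets c n \<union> NewS"
  proof cases
    case n0
    have f: "x div 2 \<noteq> y div 2" "y div 2 \<noteq> z div 2" "x div 2 \<noteq> z div 2" using fib_ne h n0 by auto
    have "S = {c (x div 2) (y div 2), c (y div 2) (z div 2), c (x div 2) (z div 2)}"
      using h(1) n0 unfolding c'_def by simp
    moreover have "x div 2 < n" "y div 2 < n" "z div 2 < n" using h by auto
    moreover have "card {c (x div 2) (y div 2), c (y div 2) (z div 2), c (x div 2) (z div 2)} = 3"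
      using h(8) calculation(1) h(1) by simp
    ultimately have "S \<in> triangle_sets c n" using tri_intro[of "x div 2" n "y div 2" "z div 2" c] f by simp
    then show ?thesis by simp
  next
    case xy
    then have e: "c' x y = k+1" using k1 by simp
    have "y = Suc x mod (2*n) \<or> x = Suc y mod (2*n)" using xy(1) unfolding cyc_def .
    then show ?thesis
    proof
      assume a: "y = Suc x mod (2*n)"
      have "S = {k+1, c' y z, c' x z}" using h(1) e by simp
      then have "S \<in> NewS" using one_edge[OF h(2-7) a xy(3) xy(2)] cS by simp
      then show ?thesis by simp
    next
      assume a: "x = Suc y mod (2*n)"
      have "S = {k+1, c' x z, c' y z}" using h(1) e by auto
      moreover have "\<not> cyc (2*n) z y" using xy cyc_sym by blast
      ultimately have "S \<in> NewS" using one_edge[OF h(3,2,4) h(5)[symmetric] h(7) h(6) a] xy(2,3) cS by simp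
      then show ?thesis by simp
    qed
  next
    case yz
    then have e: "c' y z = k+1" using k1 by simp
    have "z = Suc y mod (2*n) \<or> y = Suc z mod (2*n)" using yz(2) unfolding cyc_def .
    then show ?thesis
    proof
      assume a: "z = Suc y mod (2*n)"
      have "S = {k+1, c' z x, c' y x}" using h(1) e sy by auto
      moreover have "\<not> cyc (2*n) y x" "\<not> cyc (2*n) z x" using yz cyc_sym by blast+
      ultimately have "S \<in> NewS" using one_edge[OF h(3,4,2) h(6) h(7)[symmetric] h(5)[symmetric] a] cS by simp
      then show ?thesis by simp
    next
      assume a: "y = Suc z mod (2*n)"
      have "S = {k+1, c' y x, c' z x}" using h(1) e sy by auto
      moreover have "\<not> cyc (2*n) z x" "\<not> cyc (2*n) y x" using yz cyc_sym by blast+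
      ultimately have "S \<in> NewS" using one_edge[OF h(4,3,2) h(6)[symmetric] h(5)[symmetric] h(7)[symmetric] a] cS by simp
      then show ?thesis by simp
    qed
  next
    case xz
    then have e: "c' x z = k+1" using k1 by simp
    have "z = Suc x mod (2*n) \<or> x = Suc z mod (2*n)" using xz(3) unfolding cyc_def .
    then show ?thesis
    proof
      assume a: "z = Suc x mod (2*n)"
      have "S = {k+1, c' z y, c' x y}" using h(1) e sy by auto
      moreover have "\<not> cyc (2*n) z y" using xz cyc_sym by blast
      ultimately have "S \<in> NewS" using one_edge[OF h(2,4,3) h(7) h(6)[symmetric] h(5) a] xz(1) cS by simp
      then show ?thesis by simp
    next
      assume a: "x = Suc z mod (2*n)"
      have "S = {k+1, c' x y, c' z y}" using h(1) e sy by auto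
      moreover have "\<not> cyc (2*n) z y" using xz cyc_sym by blast
      ultimately have "S \<in> NewS" using one_edge[OF h(4,2,3) h(7)[symmetric] h(5) h(6)[symmetric] a] xz(1) cS by simp
      then show ?thesis by simp
    qed
  qed
qed

lemma tri_eq: "triangle_sets c' (2*n) = triangle_sets c n \<union> NewS"
proof
  show "triangle_sets c n \<union> NewS \<subseteq> triangle_sets c' (2*n)"
    using old_sub T_sub special unfolding NewS_def by auto
qed (rule tri_sub)

lemma old_pow: "triangle_sets c n \<subseteq> Pow {1..k}"
proof
  fix S assume "S \<in> triangle_sets c n"
  then obtain a b d where h: "S = {c a b, c b d, c a d}" "a < n" "b < n" "d < n" "a \<noteq> b" "b \<noteq> d" "a \<noteq> d"
    unfolding triangle_sets_def by blast
  have "c a b \<in> {1..k}" "c b d \<in> {1..k}" "c a d \<in> {1..k}" using crange h(2-7) by blast+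
  then show "S \<in> Pow {1..k}" using h(1) by simp
qed

lemma old_fin: "finite (triangle_sets c n)"
  using old_pow finite_subset by (metis finite_Pow_iff finite_atLeastAtMost)

lemma newS_k1: "S \<in> NewS \<Longrightarrow> k+1 \<in> S" unfolding NewS_def by auto

lemma old_nk1: "S \<in> triangle_sets c n \<Longrightarrow> k+1 \<notin> S"
proof
  assume "S \<in> triangle_sets c n" "k+1 \<in> S"
  then have "k+1 \<in> {1..k}" using old_pow by blast
  then show False by simp
qed

lemma k1_set: "{S \<in> triangle_sets c' (2*n). k+1 \<in> S} = NewS"
  using tri_eq newS_k1 old_nk1 by blast

lemma card_new: "card NewS = card T + 1"
proof -
  let ?f = "\<lambda>S. insert (k+1) (S - {k})"
  have Tsub: "T \<subseteq> triangle_sets c n" unfolding T_def by auto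
  have fT: "finite T" using old_fin Tsub finite_subset by blast
  have inj: "inj_on ?f T"
  proof
    fix S S' assume a: "S \<in> T" "S' \<in> T" "?f S = ?f S'"
    have "k+1 \<notin> S" "k+1 \<notin> S'" "k \<in> S" "k \<in> S'" using a Tsub old_nk1 unfolding T_def by auto
    then have e: "S = insert k (?f S - {k+1})" "S' = insert k (?f S' - {k+1})" by auto
    then show "S = S'" using a(3) by metis
  qed
  have "{k+1,k,col} \<notin> ?f ` T"
  proof
    assume "{k+1,k,col} \<in> ?f ` T"
    then obtain S where "{k+1,k,col} = ?f S" by blast
    then have "k \<in> ?f S" by blast
    then show False by simp
  qed
  moreover have "NewS = insert {k+1,k,col} (?f ` T)" unfolding NewS_def by blast
  moreover have "finite (?f ` T)" using fT by blast
  ultimately have "card NewS = card (?f ` T) + 1" by simp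
  then show ?thesis using card_image[OF inj] by simp
qed

lemma card_all: "card (triangle_sets c' (2*n)) = card (triangle_sets c n) + card NewS"
proof -
  have "triangle_sets c n \<inter> NewS = {}" using newS_k1 old_nk1 by blast
  moreover have "finite T" using old_fin unfolding T_def by simp
  then have "finite NewS" unfolding NewS_def by simp
  ultimately show ?thesis using tri_eq old_fin card_Un_disjoint by metis
qed


lemma E_sym: "colour_edge c' (2*n) i a b \<Longrightarrow> colour_edge c' (2*n) i b a"
  unfolding colour_edge_def using c'_sym by auto

lemma all_from0:
  assumes "\<forall>v<2*n. (colour_edge c' (2*n) i)\<^sup>*\<^sup>* 0 v"
  shows "\<forall>u<2*n. \<forall>v<2*n. (colour_edge c' (2*n) i)\<^sup>*\<^sup>* u v"
proof (intro allI impI)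
  fix u v assume "u < 2*n" "v < 2*n"
  then have "(colour_edge c' (2*n) i)\<^sup>*\<^sup>* u 0" "(colour_edge c' (2*n) i)\<^sup>*\<^sup>* 0 v"
    using assms rtp_sym[of "colour_edge c' (2*n) i", OF E_sym] by blast+
  then show "(colour_edge c' (2*n) i)\<^sup>*\<^sup>* u v" by (rule rtranclp_trans)
qed

lemma conn_k1: "\<forall>v<2*n. (colour_edge c' (2*n) (k+1))\<^sup>*\<^sup>* 0 v"
proof (intro allI impI)
  fix v assume v: "v < 2*n"
  have st: "colour_edge c' (2*n) (k+1) x ((x+1) mod (2*n))" if "x < 2*n" for x
  proof -
    have "(x+1) mod (2*n) \<noteq> x" using that n4 by (auto simp: sucmod)
    moreover have "cyc (2*n) x ((x+1) mod (2*n))" unfolding cyc_def by simp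
    ultimately show ?thesis unfolding colour_edge_def using that c'_k1 n4 by auto
  qed
  have "0 < 2*n" using n4 by simp
  from rtp_steps[where N="2*n" and R="colour_edge c' (2*n) (k+1)" and s=1 and x=0 and t=v, OF this st this] v
  show "(colour_edge c' (2*n) (k+1))\<^sup>*\<^sup>* 0 v" by simp
qed

lemma mod_shift: assumes "a mod N = (a + d) mod N" "0 < d" "d < (N::nat)" shows False
proof -
  have "(a+d) mod N = a mod N" using assms(1) by simp
  then have "N dvd d" using mod_eq_dvd_iff_nat[of a "a+d" N] by simp
  then show False using assms(2,3) by (auto dest: dvd_imp_le)
qed

lemma ek: "x < 2*n \<Longrightarrow> colour_edge c' (2*n) k x ((x+2) mod (2*n))"
proof -
  assume x: "x < 2*n"
  define y where "y = (x+2) mod (2*n)"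
  have y: "y < 2*n" unfolding y_def using x by simp
  have fy: "y div 2 = Suc (x div 2) mod n" unfolding y_def by (rule fib2)
  have fx: "x div 2 < n" using x by auto
  have ne: "x div 2 \<noteq> y div 2" using fy fx n4 by (auto simp: sucmod)
  then have xy: "x \<noteq> y" by auto
  have "cyc n (x div 2) (y div 2)" unfolding cyc_def using fy by simp
  then have ck2: "c (x div 2) (y div 2) = k" using ck' fx y ne by auto
  have "\<not> cyc (2*n) x y"
  proof
    assume "cyc (2*n) x y"
    then have "(x+2) mod (2*n) = Suc x mod (2*n) \<or> x = Suc ((x+2) mod (2*n)) mod (2*n)"
      unfolding cyc_def y_def .
    then show False
    proof
      assume h: "(x+2) mod (2*n) = Suc x mod (2*n)"
      have "Suc x mod (2*n) = (Suc x + 1) mod (2*n)" using h by simp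
      then show False using mod_shift[of "Suc x" "2*n" 1] n4 by simp
    next
      assume h: "x = Suc ((x+2) mod (2*n)) mod (2*n)"
      have "Suc ((x+2) mod (2*n)) mod (2*n) = Suc (x+2) mod (2*n)" by (rule mod_Suc_eq)
      then have "x mod (2*n) = (x + 3) mod (2*n)" using h x by (simp add: numeral_3_eq_3)
      then show False using mod_shift[of x "2*n" 3] n4 by simp
    qed
  qed
  then have "c' x y = k" unfolding c'_def using ck2 by simp
  then show ?thesis unfolding colour_edge_def y_def[symmetric] using x y xy by simp
qed

lemma conn_k: "\<forall>v<2*n. (colour_edge c' (2*n) k)\<^sup>*\<^sup>* 0 v"
proof (intro allI impI)
  fix v assume v: "v < 2*n"
  let ?R = "colour_edge c' (2*n) k"
  have p: "0 < 2*n" using n4 by simp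
  have steps: "?R\<^sup>*\<^sup>* x ((x + 2*t) mod (2*n))" if "x < 2*n" for x t
    using rtp_steps[where N="2*n" and R="?R" and s=2 and x=x and t=t, OF p ek that] by simp
  have "\<not> cyc (2*n) 0 3" unfolding cyc_def using n4 by simp
  moreover have "cyc n 0 1" unfolding cyc_def using n4 by simp
  then have "c 0 1 = k" using ck' n4 by simp
  ultimately have "c' 0 3 = k" unfolding c'_def by simp
  then have e03: "?R 0 3" unfolding colour_edge_def using n4 by simp
  show "?R\<^sup>*\<^sup>* 0 v"
  proof (cases "even v")
    case True
    then obtain t where "v = 2*t" by blast
    then show ?thesis using steps[of 0 t] v p by simp
  next
    case False
    have "?R\<^sup>*\<^sup>* 3 v"
    proof (cases "v = 1")
      case True
      have e: "3 + 2*(n-1) = 1 + 2*n" using n4 by simp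
      have "(1 + 2*n) mod (2*n) = 1" using n4 by (simp add: mod_Suc)
      then have "(3 + 2*(n-1)) mod (2*n) = 1" unfolding e .
      then show ?thesis using steps[of 3 "n-1"] n4 True by simp
    next
      case f: False
      have "v = 3 + 2*((v-3) div 2)" using False f by presburger
      then show ?thesis using steps[of 3 "(v-3) div 2"] v n4 by simp
    qed
    then show ?thesis using e03 by (meson converse_rtranclp_into_rtranclp)
  qed
qed

lemma lift_edge: "colour_edge c n i a b \<Longrightarrow> i \<noteq> k \<Longrightarrow> x < 2*n \<Longrightarrow> y < 2*n \<Longrightarrow> x div 2 = a \<Longrightarrow> y div 2 = b
  \<Longrightarrow> colour_edge c' (2*n) i x y"
  unfolding colour_edge_def using c'_lift by auto

lemma lift_path:
  assumes "(colour_edge c n i)\<^sup>*\<^sup>* a b" "i \<noteq> k"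
  shows "(colour_edge c' (2*n) i)\<^sup>*\<^sup>* (2*a) (2*b)"
  using assms(1)
proof (induction rule: rtranclp_induct)
  case base then show ?case by simp
next
  case (step b d)
  then have "b < n" "d < n" unfolding colour_edge_def by auto
  then have "colour_edge c' (2*n) i (2*b) (2*d)" using lift_edge[where x="2*b" and y="2*d", OF step(2) assms(2)] by simp
  then show ?case using step(3) by (meson rtranclp.rtrancl_into_rtrancl)
qed

lemma conn_low:
  assumes "i \<in> {1..k}" "i \<noteq> k"
  shows "\<forall>v<2*n. (colour_edge c' (2*n) i)\<^sup>*\<^sup>* 0 v"
proof (intro allI impI)
  fix v assume v: "v < 2*n"
  let ?R = "colour_edge c' (2*n) i"
  have fib: "?R\<^sup>*\<^sup>* x (2*(x div 2))" if x: "x < 2*n" for x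
  proof (cases "even x")
    case True then show ?thesis by simp
  next
    case False
    define a where "a = x div 2"
    have a: "a < n" unfolding a_def using x by auto
    have "(a+1) mod n < n" "(a+1) mod n \<noteq> a" using a n4 by (auto simp: sucmod)
    then have "(colour_edge c n i)\<^sup>*\<^sup>* a ((a+1) mod n)" using conn assms(1) a by blast
    then obtain j where j: "colour_edge c n i a j"
      using \<open>(a+1) mod n \<noteq> a\<close> by (metis converse_rtranclpE)
    then have jn: "j < n" unfolding colour_edge_def by auto
    have j': "colour_edge c n i j a" using j csym unfolding colour_edge_def by auto
    have "?R x (2*j)" using lift_edge[where x=x and y="2*j", OF j assms(2) x] jn a_def by simp
    moreover have "?R (2*j) (2*a)" using lift_edge[where x="2*j" and y="2*a", OF j' assms(2)] jn a by simp
    ultimately show ?thesis unfolding a_def by (meson converse_rtranclp_into_rtranclp r_into_rtranclp)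
  qed
  have "v div 2 < n" using v by auto
  then have "(colour_edge c n i)\<^sup>*\<^sup>* 0 (v div 2)" using conn assms(1) n4 by auto
  then have "?R\<^sup>*\<^sup>* (2*0) (2*(v div 2))" using lift_path[OF _ assms(2)] by blast
  then have "?R\<^sup>*\<^sup>* 0 (2*(v div 2))" by simp
  moreover have "?R\<^sup>*\<^sup>* (2*(v div 2)) v" using rtp_sym[where R="?R", OF E_sym fib[OF v]] .
  ultimately show "?R\<^sup>*\<^sup>* 0 v" by (rule rtranclp_trans)
qed

lemma iscol': "is_colouring c' (2*n) (k+1)"
  unfolding is_colouring_def using c'_sym c'_range by auto

lemma conn': "connected_colouring c' (2*n) (k+1)"
  unfolding connected_colouring_def
proof (intro conjI ballI allI impI)
  show "is_colouring c' (2*n) (k+1)" by (rule iscol')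
next
  fix i u v assume i: "i \<in> {1..k+1}" and uv: "u < 2*n" "v < 2*n"
  have "\<forall>v<2*n. (colour_edge c' (2*n) i)\<^sup>*\<^sup>* 0 v"
  proof (cases "i = k+1")
    case True then show ?thesis using conn_k1 by simp
  next
    case False
    show ?thesis
    proof (cases "i = k")
      case True then show ?thesis using conn_k by simp
    next
      case f: False then show ?thesis using conn_low[of i] i False by auto
    qed
  qed
  then show "(colour_edge c' (2*n) i)\<^sup>*\<^sup>* u v" using all_from0 uv by blast
qed

lemma cycle': "colour_class_is_cycle c' (2*n) (k+1)"
proof -
  have a: "2*n \<ge> 3" using n4 by simp
  have d: "\<forall>u v. colour_edge c' (2*n) (k+1) u v \<longleftrightarrow>
     (\<exists>j<2*n. (u = j \<and> v = Suc j mod (2*n)) \<or> (v = j \<and> u = Suc j mod (2*n)))"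
  proof (intro allI iffI)
    fix u v assume "colour_edge c' (2*n) (k+1) u v"
    then have "u < 2*n" "v < 2*n" "cyc (2*n) u v" using c'_k1 unfolding colour_edge_def by auto
    then show "\<exists>j<2*n. (u = j \<and> v = Suc j mod (2*n)) \<or> (v = j \<and> u = Suc j mod (2*n))"
      unfolding cyc_def by auto
  next
    fix u v assume "\<exists>j<2*n. (u = j \<and> v = Suc j mod (2*n)) \<or> (v = j \<and> u = Suc j mod (2*n))"
    then have h: "u < 2*n" "v < 2*n" "u \<noteq> v" "cyc (2*n) u v"
      using n4 unfolding cyc_def by (auto simp: sucmod split: if_splits)
    then show "colour_edge c' (2*n) (k+1) u v" unfolding colour_edge_def using c'_k1 by auto
  qed
  show ?thesis unfolding colour_class_is_cycle_def
    apply (rule exI[where x="2*n"])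
    apply (rule exI[where x="\<lambda>j::nat. j"])
    using a d by simp
qed

lemma dist2: "\<forall>i<2*n. c' i ((i+2) mod (2*n)) = k"
  using ek unfolding colour_edge_def by auto

end

theorem lemma6:
  fixes c :: "nat \<Rightarrow> nat \<Rightarrow> nat" and n k l :: nat
  assumes "k \<ge> 1" and "n \<ge> 3"
    and "connected_colouring c n k"
    and "card (triangle_sets c n) = l"
    and "int (card {S \<in> triangle_sets c n. k \<in> S}) = int k - 2"
    and "\<forall>u<n. \<forall>v<n. u \<noteq> v \<longrightarrow>
           (c u v = k \<longleftrightarrow> v = Suc u mod n \<or> u = Suc v mod n)"
    and "\<exists>col. \<forall>i<n. c i ((i + 2) mod n) = col"
  shows "\<exists>c' :: nat \<Rightarrow> nat \<Rightarrow> nat.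
           connected_colouring c' (2 * n) (k + 1)
         \<and> card (triangle_sets c' (2 * n)) = l + k - 1
         \<and> card {S \<in> triangle_sets c' (2 * n). k + 1 \<in> S} = k - 1
         \<and> colour_class_is_cycle c' (2 * n) (k + 1)
         \<and> (\<exists>col. \<forall>i<2 * n. c' i ((i + 2) mod (2 * n)) = col)"
proof -
  obtain col where col: "\<forall>i<n. c i ((i + 2) mod n) = col" using assms(7) by blast
  have "0 \<le> int (card {S \<in> triangle_sets c n. k \<in> S})" by simp
  then have "int k \<ge> 2" using assms(5) by linarith
  then have k2: "k \<ge> 2" by simp
  have "int (card {S \<in> triangle_sets c n. k \<in> S}) = int (k - 2)" using assms(5) k2 by simp
  then have cT: "card {S \<in> triangle_sets c n. k \<in> S} = k - 2" by (simp only: of_nat_eq_iff)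
  have isc: "is_colouring c n k" and cn: "\<forall>i\<in>{1..k}. \<forall>u<n. \<forall>v<n. (colour_edge c n i)\<^sup>*\<^sup>* u v"
    using assms(3) unfolding connected_colouring_def by auto
  have n4: "n \<ge> 4"
  proof (rule ccontr)
    assume "\<not> n \<ge> 4"
    then have n3: "n = 3" using assms(2) by simp
    have "(colour_edge c n 1)\<^sup>*\<^sup>* 0 1" using cn k2 n3 by auto
    then obtain y where y: "colour_edge c n 1 0 y"
      by (metis converse_rtranclpE zero_neq_one)
    then have "y = 1 \<or> y = 2" "c 0 y = 1" using n3 unfolding colour_edge_def by auto
    moreover have "c 0 1 = k" "c 0 2 = k" using assms(6) n3 by auto
    ultimately show False using k2 by auto
  qed
  have "L6 c n k col" unfolding L6_def using n4 k2 isc cn assms(6) col by auto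
  then interpret L: L6 c n k col .
  have "card L.T = k - 2" unfolding L.T_def using cT .
  then have "card L.NewS = k - 1" using L.card_new k2 by simp
  then have "card (triangle_sets L.c' (2*n)) = l + k - 1" "card {S \<in> triangle_sets L.c' (2 * n). k + 1 \<in> S} = k - 1"
    using L.card_all assms(4) L.k1_set k2 by auto
  then show ?thesis using L.conn' L.cycle' L.dist2 by blast
qed

end
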